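(* For all types $A$, $B$, $C$: if $A \simeq B$ and $B \equiv C$, then $A \simeq C$.
   Context: Types and rows share one grammar: $A,B,C,\rho ::= X \mid \alpha \mid \star \mid \iota \mid A\to B \mid \forall X{:}K.\,A \mid [\rho] \mid \langle\rho\rangle \mid \cdot \mid \ell{:}A;\rho$, where $X$ ranges over type variables (bound by $\forall$), $\alpha$ over type names, $\star$ is the dynamic type (also serving as the dynamic row), $\iota$ over base types, $[\rho]$ and $\langle\rho\rangle$ are record and variant types, $\cdot$ is the empty row, $\ell$ ranges over labels, and $K\in\{\mathsf T,\mathsf R\}$ is a kind. Types are identified up to renaming of bound variables; $\mathit{ftv}(A)$ is the set of free type variables. Row matching $\rho \triangleright_\ell A,\rho'$ is defined by: $(\ell{:}A;\rho)\triangleright_\ell A,\rho$; if $\ell'\neq\ell$ and $\rho\triangleright_\ell A,\rho'$ then $(\ell'{:}B;\rho)\triangleright_\ell A,(\ell'{:}B;\rho')$; and $\star\triangleright_\ell \star,\star$. $\mathbf{QPoly}(A)$ holds iff $A$ is not of the form $\forall X{:}K.\,B$ and $\star$ occurs in $A$. Row concatenation $\rho_1\odot\rho_2$ is defined only when $\rho_1=\ell_1{:}A_1;\dots;\ell_n{:}A_n;\cdot$, and then equals $\ell_1{:}A_1;\dots;\ell_n{:}A_n;\rho_2$. $\mathit{dom}(\rho)$ is the set of labels in the top-level label prefix of $\rho$. A row $\rho$ ends with $\star$ if $\rho=\rho'\odot\star$ for some $\rho'$. Type equivalence $\equiv$ is the least equivalence relation that is a congruence for $\to$, $\forall X{:}K.\,-$,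 $[-]$, $\langle-\rangle$ and $\ell{:}-;-$, and contains $\ell{:}A;\ell'{:}B;\rho \equiv \ell'{:}B;\ell{:}A;\rho$ whenever $\ell\neq\ell'$. Consistency $\simeq$ is defined inductively: $A\simeq A$; $\star\simeq A$; $A\simeq\star$; $A_1\to A_2\simeq B_1\to B_2$ if $A_1\simeq B_1$ and $A_2\simeq B_2$; $\forall X{:}K.A\simeq\forall X{:}K.B$ if $A\simeq B$; $\forall X{:}K.A\simeq B$ if $\mathbf{QPoly}(B)$, $X\notin\mathit{ftv}(B)$ and $A\simeq B$; $A\simeq\forall X{:}K.B$ if $\mathbf{QPoly}(A)$, $X\notin\mathit{ftv}(A)$ and $A\simeq B$; $[\rho_1]\simeq[\rho_2]$ and $\langle\rho_1\rangle\simeq\langle\rho_2\rangle$ if $\rho_1\simeq\rho_2$; $\ell{:}A;\rho_1\simeq B$ if $B\triangleright_\ell B',\rho_2$, $A\simeq B'$ and $\rho_1\simeq\rho_2$; $A\simeq \ell{:}B;\rho_2$ if $A\triangleright_\ell A',\rho_1$, $A'\simeq B$ and $\rho_1\simeq\rho_2$. *)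

theory Defs
  imports Main
begin

text \<open>Types and rows share one grammar. Bound type variables are represented by
  de Bruijn indices (TVar i), which realises the identification of types up to
  renaming of bound variables.\<close>

datatype kind = KT | KR

datatype ('n, 'b, 'l) ty =
    TVar nat
  | TName 'n
  | Dyn                           (* the dynamic type / row *)
  | Base 'b
  | Fun "('n, 'b, 'l) ty" "('n, 'b, 'l) ty"
  | Forall kind "('n, 'b, 'l) ty"
  | Record "('n, 'b, 'l) ty"
  | Variant "('n, 'b, 'l) ty"
  | REmpty
  | RCons 'l "('n, 'b, 'l) ty" "('n, 'b, 'l) ty"

fun shift :: "nat \<Rightarrow> ('n, 'b, 'l) ty \<Rightarrow> ('n, 'b, 'l) ty" where
  "shift c (TVar i) = (if c \<le> i then TVar (Suc i) else TVar i)"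
| "shift c (TName a) = TName a"
| "shift c Dyn = Dyn"
| "shift c (Base b) = Base b"
| "shift c (Fun A B) = Fun (shift c A) (shift c B)"
| "shift c (Forall K A) = Forall K (shift (Suc c) A)"
| "shift c (Record r) = Record (shift c r)"
| "shift c (Variant r) = Variant (shift c r)"
| "shift c REmpty = REmpty"
| "shift c (RCons l A r) = RCons l (shift c A) (shift c r)"

fun dyn_occurs :: "('n, 'b, 'l) ty \<Rightarrow> bool" where
  "dyn_occurs (TVar i) = False"
| "dyn_occurs (TName a) = False"
| "dyn_occurs Dyn = True"
| "dyn_occurs (Base b) = False"
| "dyn_occurs (Fun A B) = (dyn_occurs A \<or> dyn_occurs B)"
| "dyn_occurs (Forall K A) = dyn_occurs A"
| "dyn_occurs (Record r) = dyn_occurs r"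
| "dyn_occurs (Variant r) = dyn_occurs r"
| "dyn_occurs REmpty = False"
| "dyn_occurs (RCons l A r) = (dyn_occurs A \<or> dyn_occurs r)"

definition QPoly :: "('n, 'b, 'l) ty \<Rightarrow> bool" where
  "QPoly A \<longleftrightarrow> (\<nexists>K B. A = Forall K B) \<and> dyn_occurs A"

inductive row_match :: "('n, 'b, 'l) ty \<Rightarrow> 'l \<Rightarrow> ('n, 'b, 'l) ty \<Rightarrow> ('n, 'b, 'l) ty \<Rightarrow> bool" where
  rm_head: "row_match (RCons l A r) l A r"
| rm_skip: "l' \<noteq> l \<Longrightarrow> row_match r l A r' \<Longrightarrow> row_match (RCons l' B r) l A (RCons l' B r')"
| rm_dyn: "row_match Dyn l Dyn Dyn"

inductive ty_equiv :: "('n, 'b, 'l) ty \<Rightarrow> ('n, 'b, 'l) ty \<Rightarrow> bool" (infix "\<equiv>\<^sub>t" 50) where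
  eq_refl: "A \<equiv>\<^sub>t A"
| eq_sym: "A \<equiv>\<^sub>t B \<Longrightarrow> B \<equiv>\<^sub>t A"
| eq_trans: "A \<equiv>\<^sub>t B \<Longrightarrow> B \<equiv>\<^sub>t C \<Longrightarrow> A \<equiv>\<^sub>t C"
| eq_fun: "A1 \<equiv>\<^sub>t B1 \<Longrightarrow> A2 \<equiv>\<^sub>t B2 \<Longrightarrow> Fun A1 A2 \<equiv>\<^sub>t Fun B1 B2"
| eq_forall: "A \<equiv>\<^sub>t B \<Longrightarrow> Forall K A \<equiv>\<^sub>t Forall K B"
| eq_record: "r1 \<equiv>\<^sub>t r2 \<Longrightarrow> Record r1 \<equiv>\<^sub>t Record r2"
| eq_variant: "r1 \<equiv>\<^sub>t r2 \<Longrightarrow> Variant r1 \<equiv>\<^sub>t Variant r2"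
| eq_rcons: "A \<equiv>\<^sub>t B \<Longrightarrow> r1 \<equiv>\<^sub>t r2 \<Longrightarrow> RCons l A r1 \<equiv>\<^sub>t RCons l B r2"
| eq_swap: "l \<noteq> l' \<Longrightarrow> RCons l A (RCons l' B r) \<equiv>\<^sub>t RCons l' B (RCons l A r)"

text \<open>Consistency. In the rules with a quantifier on one side only, the other side
  is shifted under the binder; the side condition X \<notin> ftv(B) is thereby built in.\<close>
inductive consistent :: "('n, 'b, 'l) ty \<Rightarrow> ('n, 'b, 'l) ty \<Rightarrow> bool" (infix "\<simeq>" 50) where
  c_refl: "A \<simeq> A"
| c_dynL: "Dyn \<simeq> A"
| c_dynR: "A \<simeq> Dyn"
| c_fun: "A1 \<simeq> B1 \<Longrightarrow> A2 \<simeq> B2 \<Longrightarrow> Fun A1 A2 \<simeq> Fun B1 B2"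
| c_forall: "A \<simeq> B \<Longrightarrow> Forall K A \<simeq> Forall K B"
| c_forallL: "QPoly B \<Longrightarrow> A \<simeq> shift 0 B \<Longrightarrow> Forall K A \<simeq> B"
| c_forallR: "QPoly A \<Longrightarrow> shift 0 A \<simeq> B \<Longrightarrow> A \<simeq> Forall K B"
| c_record: "r1 \<simeq> r2 \<Longrightarrow> Record r1 \<simeq> Record r2"
| c_variant: "r1 \<simeq> r2 \<Longrightarrow> Variant r1 \<simeq> Variant r2"
| c_rconsL: "row_match B l B' r2 \<Longrightarrow> A \<simeq> B' \<Longrightarrow> r1 \<simeq> r2 \<Longrightarrow> RCons l A r1 \<simeq> B"
| c_rconsR: "row_match A l A' r1 \<Longrightarrow> A' \<simeq> B \<Longrightarrow> r1 \<simeq> r2 \<Longrightarrow> A \<simeq> RCons l B r2"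

end

theory Submission
  imports Defs
begin

inductive st1 :: "('n, 'b, 'l) ty \<Rightarrow> ('n, 'b, 'l) ty \<Rightarrow> bool" where
  s_funL: "st1 A A' \<Longrightarrow> st1 (Fun A B) (Fun A' B)"
| s_funR: "st1 B B' \<Longrightarrow> st1 (Fun A B) (Fun A B')"
| s_forall: "st1 A A' \<Longrightarrow> st1 (Forall K A) (Forall K A')"
| s_record: "st1 A A' \<Longrightarrow> st1 (Record A) (Record A')"
| s_variant: "st1 A A' \<Longrightarrow> st1 (Variant A) (Variant A')"
| s_rconsH: "st1 A A' \<Longrightarrow> st1 (RCons l A r) (RCons l A' r)"
| s_rconsT: "st1 r r' \<Longrightarrow> st1 (RCons l A r) (RCons l A r')"
| s_swap: "l \<noteq> l' \<Longrightarrow> st1 (RCons l A (RCons l' B r)) (RCons l' B (RCons l A r))"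

lemma st1_sym: "st1 A B \<Longrightarrow> st1 B A"
  by (induction rule: st1.induct) (auto intro: st1.intros)

lemma st1_shift: "st1 A B \<Longrightarrow> st1 (shift n A) (shift n B)"
  by (induction arbitrary: n rule: st1.induct) (auto intro: st1.intros)

lemma st1_dyn: "st1 A B \<Longrightarrow> dyn_occurs A = dyn_occurs B"
  by (induction rule: st1.induct) auto

lemma st1_forall: "st1 A B \<Longrightarrow> (\<exists>K C. A = Forall K C) = (\<exists>K C. B = Forall K C)"
  by (induction rule: st1.induct) auto

lemma st1_qpoly: "st1 A B \<Longrightarrow> QPoly A \<Longrightarrow> QPoly B"
  unfolding QPoly_def using st1_dyn st1_forall by metis

lemma rc_head: "A \<simeq> B \<Longrightarrow> r1 \<simeq> r2 \<Longrightarrow> RCons l A r1 \<simeq> RCons l B r2"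
  by (rule c_rconsL[OF rm_head])

lemma st1_cons: "st1 B C \<Longrightarrow> B \<simeq> C"
proof (induction rule: st1.induct)
  case (s_swap l l' A B r)
  have "row_match (RCons l' B (RCons l A r)) l A (RCons l' B r)"
    using s_swap by (auto intro: row_match.intros)
  then show ?case by (rule c_rconsL) (rule c_refl)+
qed (auto intro: c_fun c_forall c_record c_variant rc_head c_refl)

lemma match_commute:
  "row_match A l A' r1 \<Longrightarrow> row_match r1 l' Y r1'' \<Longrightarrow> l \<noteq> l' \<Longrightarrow>
   \<exists>\<rho>. row_match A l' Y \<rho> \<and> row_match \<rho> l A' r1''"
proof (induction arbitrary: r1'' rule: row_match.induct)
  case (rm_head l A r)
  then show ?case by (auto intro: row_match.intros)
next
  case (rm_skip l0 l r A r' X)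
  note IH = rm_skip.IH and H = rm_skip.hyps and P = rm_skip.prems
  from rm_skip.prems(1) show ?case
  proof (cases rule: row_match.cases)
    case rm_head
    then show ?thesis using rm_skip H by (auto intro: row_match.intros)
  next
    case (rm_skip r1b)
    then obtain \<rho>1 where "row_match r l' Y \<rho>1" "row_match \<rho>1 l A r1b"
      using IH P(2) by blast
    then show ?thesis using rm_skip H
      by (auto intro: row_match.intros)
  qed
next
  case (rm_dyn l)
  then show ?case by (auto elim: row_match.cases intro: row_match.intros)
qed

lemma match_dyn_tail: "row_match A l A' Dyn \<Longrightarrow> A = Dyn \<or> A = RCons l A' Dyn"
  by (auto elim: row_match.cases)

lemma match_forall_tail: "row_match A l A' (Forall K Z) \<Longrightarrow> A = RCons l A' (Forall K Z)"
  by (auto elim: row_match.cases)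

lemma match_cons_inv: "row_match A l A' (RCons l0 X r1') \<Longrightarrow>
  A = RCons l A' (RCons l0 X r1') \<or> (\<exists>r1a. A = RCons l0 X r1a \<and> l0 \<noteq> l \<and> row_match r1a l A' r1')"
  by (auto elim: row_match.cases)

lemma lemT:
  "r1 \<simeq> R \<Longrightarrow> R = RCons l' Y r \<Longrightarrow> row_match A l A' r1 \<Longrightarrow> A' \<simeq> B \<Longrightarrow> l \<noteq> l' \<Longrightarrow>
   A \<simeq> RCons l' Y (RCons l B r)"
proof (induction arbitrary: A A' Y r rule: consistent.induct)
  case (c_refl r1)
  then obtain \<rho> where m: "row_match A l' Y \<rho>" "row_match \<rho> l A' r"
    using match_commute[of A l A' r1 l' Y r] by (auto intro: row_match.intros)
  show ?case
    by (rule c_rconsR[OF m(1) consistent.c_refl c_rconsR[OF m(2) c_refl.prems(3) consistent.c_refl]])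
next
  case (c_dynL R)
  have m: "row_match (RCons l' Y (RCons l B r)) l B (RCons l' Y r)"
    using c_dynL.prems(4) by (auto intro: row_match.intros)
  have "A = Dyn \<or> A = RCons l A' Dyn" by (rule match_dyn_tail[OF c_dynL.prems(2)])
  then show ?case
  proof
    assume "A = Dyn" then show ?thesis by (simp add: consistent.c_dynL)
  next
    assume "A = RCons l A' Dyn"
    then show ?thesis using c_rconsL[OF m c_dynL.prems(3) consistent.c_dynL] by simp
  qed
next
  case (c_forallL R Z K)
  have A: "A = RCons l A' (Forall K Z)" by (rule match_forall_tail[OF c_forallL.prems(2)])
  have m: "row_match (RCons l' Y (RCons l B r)) l B (RCons l' Y r)"
    using c_forallL.prems(4) by (auto intro: row_match.intros)
  have "Forall K Z \<simeq> R" by (rule consistent.c_forallL[OF c_forallL.hyps])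
  then show ?case using A c_rconsL[OF m c_forallL.prems(3)] c_forallL.prems(1) by simp
next
  case (c_rconsL R l0 B'' r2'' X r1')
  have m: "row_match (RCons l' Y (RCons l B r)) l B (RCons l' Y r)"
    using c_rconsL.prems(4) by (auto intro: row_match.intros)
  from match_cons_inv[OF c_rconsL.prems(2)] show ?case
  proof
    assume "A = RCons l A' (RCons l0 X r1')"
    moreover have "RCons l0 X r1' \<simeq> R" by (rule consistent.c_rconsL[OF c_rconsL.hyps])
    ultimately show ?thesis using consistent.c_rconsL[OF m c_rconsL.prems(3)] c_rconsL.prems(1) by simp
  next
    assume "\<exists>r1a. A = RCons l0 X r1a \<and> l0 \<noteq> l \<and> row_match r1a l A' r1'"
    then obtain r1a where A: "A = RCons l0 X r1a" "l0 \<noteq> l" "row_match r1a l A' r1'" by blast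
    show ?thesis
    proof (cases "l0 = l'")
      case True
      have e: "B'' = Y" "r2'' = r" using c_rconsL.hyps(1) c_rconsL.prems(1) True
        by (auto elim: row_match.cases)
      have h1: "r1a \<simeq> RCons l B r"
        using c_rconsR[OF A(3) c_rconsL.prems(3)] c_rconsL.hyps(3) e by simp
      have h2: "row_match (RCons l' Y (RCons l B r)) l0 Y (RCons l B r)"
        using True by (simp add: row_match.rm_head)
      have h3: "X \<simeq> Y" using c_rconsL.hyps(2) e by simp
      show ?thesis unfolding A(1) by (rule consistent.c_rconsL[OF h2 h3 h1])
    next
      case False
      from c_rconsL.hyps(1) c_rconsL.prems(1) False obtain r3 where r3: "row_match r l0 B'' r3" "r2'' = RCons l' Y r3"
        by (auto elim: row_match.cases)
      have h1: "r1a \<simeq> RCons l' Y (RCons l B r3)"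
        using c_rconsL.IH(2)[OF r3(2) A(3) c_rconsL.prems(3,4)] .
      have h2: "row_match (RCons l' Y (RCons l B r)) l0 B'' (RCons l' Y (RCons l B r3))"
        using False A(2) r3(1) by (intro row_match.rm_skip) auto
      show ?thesis unfolding A(1) by (rule consistent.c_rconsL[OF h2 c_rconsL.hyps(2) h1])
    qed
  qed
next
  case (c_rconsR r1 l0 Y' r1'' Y0 r0)
  from c_rconsR.prems(1) have e: "l0 = l'" "Y0 = Y" "r0 = r" by auto
  have "\<exists>\<rho>. row_match A l' Y' \<rho> \<and> row_match \<rho> l A' r1''"
    using match_commute[OF c_rconsR.prems(2) _ c_rconsR.prems(4)] c_rconsR.hyps(1) e(1) by simp
  then obtain \<rho> where m: "row_match A l' Y' \<rho>" "row_match \<rho> l A' r1''" by blast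
  show ?case
    using consistent.c_rconsR[OF m(1) _ consistent.c_rconsR[OF m(2) c_rconsR.prems(3)]]
      c_rconsR.hyps e by blast
qed simp_all

lemma match_rcons_inv: "row_match (RCons a X r) l0 B'' r2 \<Longrightarrow>
  (l0 = a \<and> B'' = X \<and> r2 = r) \<or> (l0 \<noteq> a \<and> (\<exists>r'. row_match r l0 B'' r' \<and> r2 = RCons a X r'))"
  by (auto elim: row_match.cases)

lemma lemS:
  "A \<simeq> R \<Longrightarrow> R = RCons l B (RCons l' Y r) \<Longrightarrow> l \<noteq> l' \<Longrightarrow>
   A \<simeq> RCons l' Y (RCons l B r)"
proof (induction arbitrary: B Y r rule: consistent.induct)
  case (c_refl A)
  then show ?case using st1_cons[OF s_swap[of l l' B Y r]] by simp
next
  case (c_dynL A)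
  then show ?case by (simp add: consistent.c_dynL)
next
  case (c_forallL R A0 K)
  have sh: "shift 0 R = RCons l (shift 0 B) (RCons l' (shift 0 Y) (shift 0 r))"
    using c_forallL.prems(1) by simp
  have h1: "A0 \<simeq> RCons l' (shift 0 Y) (RCons l (shift 0 B) (shift 0 r))"
    using c_forallL.IH[OF sh c_forallL.prems(2)] .
  have q: "QPoly (RCons l' Y (RCons l B r))"
    using st1_qpoly[OF s_swap[of l l' B Y r] ] c_forallL.hyps(1) c_forallL.prems by simp
  show ?case by (rule consistent.c_forallL[OF q]) (use h1 in simp)
next
  case (c_rconsL R l0 B'' r2'' X r1)
  note P = c_rconsL.prems
  from match_rcons_inv[OF c_rconsL.hyps(1)[unfolded P(1)]] show ?case
  proof
    assume h: "l0 = l \<and> B'' = B \<and> r2'' = RCons l' Y r"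
    have m: "row_match (RCons l' Y (RCons l B r)) l B (RCons l' Y r)"
      using P(2) by (auto intro: row_match.intros)
    show ?thesis using consistent.c_rconsL[OF m] c_rconsL.hyps(2,3) h by simp
  next
    assume h: "l0 \<noteq> l \<and> (\<exists>r'. row_match (RCons l' Y r) l0 B'' r' \<and> r2'' = RCons l B r')"
    then obtain r' where r': "row_match (RCons l' Y r) l0 B'' r'" "r2'' = RCons l B r'" "l0 \<noteq> l" by blast
    from match_rcons_inv[OF r'(1)] show ?thesis
    proof
      assume h2: "l0 = l' \<and> B'' = Y \<and> r' = r"
      have m: "row_match (RCons l' Y (RCons l B r)) l0 Y (RCons l B r)"
        using h2 by (auto intro: row_match.intros)
      show ?thesis using consistent.c_rconsL[OF m] c_rconsL.hyps(2,3) h2 r' by simp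
    next
      assume "l0 \<noteq> l' \<and> (\<exists>r3. row_match r l0 B'' r3 \<and> r' = RCons l' Y r3)"
      then obtain r3 where r3: "row_match r l0 B'' r3" "r' = RCons l' Y r3" "l0 \<noteq> l'" by blast
      have m: "row_match (RCons l' Y (RCons l B r)) l0 B'' (RCons l' Y (RCons l B r3))"
        using r3 r'(3) by (intro row_match.rm_skip) auto
      have "r1 \<simeq> RCons l' Y (RCons l B r3)"
        using c_rconsL.IH(2)[of B Y r3] r'(2) r3(2) P(2) by simp
      then show ?thesis using consistent.c_rconsL[OF m c_rconsL.hyps(2)] by simp
    qed
  qed
next
  case (c_rconsR A l0 A' r1 B0 r2)
  then have e: "l0 = l" "B0 = B" "r2 = RCons l' Y r" by auto
  have h1: "row_match A l A' r1" using c_rconsR.hyps(1) e by simp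
  have h2: "A' \<simeq> B" using c_rconsR.hyps(2) e by simp
  show ?case by (rule lemT[OF c_rconsR.hyps(3) e(3) h1 h2 c_rconsR.prems(2)])
qed simp_all

lemma lemR:
  "row_match B l B' r2 \<Longrightarrow> st1 B C \<Longrightarrow>
   \<exists>C' r2'. row_match C l C' r2' \<and> (C' = B' \<or> st1 B' C') \<and> (r2' = r2 \<or> st1 r2 r2')"
proof (induction arbitrary: C rule: row_match.induct)
  case (rm_head l A r)
  from rm_head show ?case
  proof (cases rule: st1.cases)
    case (s_swap l' B r0)
    then show ?thesis by (auto intro: row_match.intros)
  qed (auto intro: row_match.intros)
next
  case (rm_skip l0 l r A r' X)
  note IH = rm_skip.IH and H = rm_skip.hyps
  from rm_skip.prems show ?case
  proof (cases rule: st1.cases)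
    case (s_rconsH X')
    then show ?thesis using H by (auto intro: row_match.intros st1.intros)
  next
    case (s_rconsT C1)
    then obtain C' r2' where "row_match C1 l C' r2'" "C' = A \<or> st1 A C'" "r2' = r' \<or> st1 r' r2'"
      using IH by blast
    then show ?thesis using s_rconsT H by (auto intro: row_match.intros st1.intros)
  next
    case (s_swap l1 Y B2)
    show ?thesis
    proof (cases "l1 = l")
      case True
      then have "A = Y" "r' = B2" using H s_swap by (auto elim: row_match.cases)
      then show ?thesis using s_swap H True by (auto intro: row_match.intros)
    next
      case False
      then obtain r2c where "row_match B2 l A r2c" "r' = RCons l1 Y r2c"
        using H s_swap by (auto elim: row_match.cases)
      then show ?thesis using s_swap H False by (auto intro: row_match.intros st1.intros)
    qed
  qed
next
  case (rm_dyn l)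
  then show ?case by (auto elim: st1.cases)
qed

lemma st1_rcons_inv: "st1 (RCons l A r) C \<Longrightarrow>
  (\<exists>A'. C = RCons l A' r \<and> st1 A A') \<or> (\<exists>r'. C = RCons l A r' \<and> st1 r r') \<or>
  (\<exists>l' B r0. r = RCons l' B r0 \<and> l \<noteq> l' \<and> C = RCons l' B (RCons l A r0))"
  by (auto elim: st1.cases)

lemma lemM: "A \<simeq> B \<Longrightarrow> st1 B C \<Longrightarrow> A \<simeq> C"
proof (induction arbitrary: C rule: consistent.induct)
  case (c_refl A)
  then show ?case by (rule st1_cons)
next
  case (c_dynL A)
  show ?case by (rule consistent.c_dynL)
next
  case (c_dynR A)
  then show ?case by (auto elim: st1.cases)
next
  case (c_fun A1 B1 A2 B2)
  from c_fun.prems show ?case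
  proof (cases rule: st1.cases)
    case (s_funL A')
    then show ?thesis using consistent.c_fun[OF c_fun.IH(1)[OF s_funL(2)] c_fun.hyps(2)] by simp
  next
    case (s_funR B')
    then show ?thesis using consistent.c_fun[OF c_fun.hyps(1) c_fun.IH(2)[OF s_funR(2)]] by simp
  qed
next
  case (c_forall A B K)
  from c_forall.prems show ?case
    by (cases rule: st1.cases) (auto intro: consistent.c_forall c_forall.IH)
next
  case (c_forallL B A K)
  show ?case
    by (rule consistent.c_forallL[OF st1_qpoly[OF c_forallL.prems c_forallL.hyps(1)]
          c_forallL.IH[OF st1_shift[OF c_forallL.prems]]])
next
  case (c_forallR A B K)
  from c_forallR.prems show ?case
    by (cases rule: st1.cases) (auto intro: consistent.c_forallR[OF c_forallR.hyps(1)] c_forallR.IH)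
next
  case (c_record r1 r2)
  from c_record.prems show ?case
    by (cases rule: st1.cases) (auto intro: consistent.c_record c_record.IH)
next
  case (c_variant r1 r2)
  from c_variant.prems show ?case
    by (cases rule: st1.cases) (auto intro: consistent.c_variant c_variant.IH)
next
  case (c_rconsL B l B' r2 A r1)
  obtain C' r2' where m: "row_match C l C' r2'" and o1: "C' = B' \<or> st1 B' C'"
    and o2: "r2' = r2 \<or> st1 r2 r2'"
    using lemR[OF c_rconsL.hyps(1) c_rconsL.prems] by blast
  have h1: "A \<simeq> C'" using o1 c_rconsL.hyps(2) c_rconsL.IH(1) by blast
  have h2: "r1 \<simeq> r2'" using o2 c_rconsL.hyps(3) c_rconsL.IH(2) by blast
  show ?case by (rule consistent.c_rconsL[OF m h1 h2])
next
  case (c_rconsR A l A' r1 B r2)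
  have base: "A \<simeq> RCons l B r2" by (rule consistent.c_rconsR[OF c_rconsR.hyps])
  from st1_rcons_inv[OF c_rconsR.prems] show ?case
  proof (elim disjE exE conjE)
    fix B' assume "C = RCons l B' r2" "st1 B B'"
    then show ?thesis using consistent.c_rconsR[OF c_rconsR.hyps(1) c_rconsR.IH(1) c_rconsR.hyps(3)] by simp
  next
    fix r' assume "C = RCons l B r'" "st1 r2 r'"
    then show ?thesis using consistent.c_rconsR[OF c_rconsR.hyps(1) c_rconsR.hyps(2) c_rconsR.IH(2)] by simp
  next
    fix l' Y r0 assume "r2 = RCons l' Y r0" "l \<noteq> l'" "C = RCons l' Y (RCons l B r0)"
    then show ?thesis using lemS[OF base] by simp
  qed
qed

lemma equiv_steps: "B \<equiv>\<^sub>t C \<Longrightarrow> st1\<^sup>*\<^sup>* B C"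
proof (induction rule: ty_equiv.induct)
  case (eq_refl A) then show ?case by simp
next
  case (eq_sym A B)
  from eq_sym.IH show ?case
  proof (induction rule: rtranclp_induct)
    case base then show ?case by simp
  next
    case (step y z)
    then show ?case using st1_sym by (meson converse_rtranclp_into_rtranclp)
  qed
next
  case (eq_trans A B C) then show ?case by simp
next
  case (eq_fun A1 B1 A2 B2)
  have "st1\<^sup>*\<^sup>* (Fun A1 A2) (Fun B1 A2)"
    using eq_fun.IH(1) by (induction rule: rtranclp_induct) (auto intro: rtranclp.rtrancl_into_rtrancl s_funL)
  moreover have "st1\<^sup>*\<^sup>* (Fun B1 A2) (Fun B1 B2)"
    using eq_fun.IH(2) by (induction rule: rtranclp_induct) (auto intro: rtranclp.rtrancl_into_rtrancl s_funR)
  ultimately show ?case by simp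
next
  case (eq_forall A B K)
  from eq_forall.IH show ?case by (induction rule: rtranclp_induct) (auto intro: rtranclp.rtrancl_into_rtrancl s_forall)
next
  case (eq_record A B)
  from eq_record.IH show ?case by (induction rule: rtranclp_induct) (auto intro: rtranclp.rtrancl_into_rtrancl s_record)
next
  case (eq_variant A B)
  from eq_variant.IH show ?case by (induction rule: rtranclp_induct) (auto intro: rtranclp.rtrancl_into_rtrancl s_variant)
next
  case (eq_rcons A B r1 r2 l)
  have "st1\<^sup>*\<^sup>* (RCons l A r1) (RCons l B r1)"
    using eq_rcons.IH(1) by (induction rule: rtranclp_induct) (auto intro: rtranclp.rtrancl_into_rtrancl s_rconsH)
  moreover have "st1\<^sup>*\<^sup>* (RCons l B r1) (RCons l B r2)"
    using eq_rcons.IH(2) by (induction rule: rtranclp_induct) (auto intro: rtranclp.rtrancl_into_rtrancl s_rconsT)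
  ultimately show ?case by simp
next
  case (eq_swap l l' A B r)
  then show ?case by (auto intro: s_swap)
qed

theorem mainTheorem4:
  fixes A B C :: "('n, 'b, 'l) ty"
  assumes "A \<simeq> B" and "B \<equiv>\<^sub>t C"
  shows "A \<simeq> C"
proof -
  have "st1\<^sup>*\<^sup>* B C" using assms(2) by (rule equiv_steps)
  then show ?thesis
    by (induction rule: rtranclp_induct) (auto intro: assms(1) lemM)
qed

end
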